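(* In a PL+C model, suppose $\sum_{i\in\mathcal U}p_i\ge\alpha k$ for some $\alpha>1$. Then for every $i\in\mathcal U$, $$p_i\ge \Pr_{PLC}(\mathcal R_{i\le k})\cdot\left[1-\left(\alpha e^{1-\alpha}\right)^k\right].$$
   Context: PL+C model: universe $\mathcal U=\{1,\dots,n\}$, fixed ranking length $k\le n$. Each item $i$ has a utility $u_i\in\mathbb R$ and a consideration probability $p_i\in(0,1]$. A consideration set $C$ is drawn by including each item independently with probability $p_i$, conditioned on $|C|\ge k$: $\Pr_C(C)=\frac{1}{z_{k,p}}\prod_{h\in C}p_h\prod_{h\notin C}(1-p_h)$ for $|C|\ge k$ (with $z_{k,p}$ the normalizing constant), and $0$ otherwise. Given $C$, a length-$k$ ranking $r$ has probability $\Pr_{PL}(r\mid C)=\prod_{t=1}^k \frac{\exp(u_{r_t})}{\sum_{h\in C\setminus\{r_1,\dots,r_{t-1}\}}\exp(u_h)}$ if all $r_t\in C$, else $0$. $\Pr_{PLC}(r)=\sum_C\Pr_C(C)\Pr_{PL}(r\mid C)$, and for a set $R$ of rankings $\Pr_{PLC}(R)=\sum_{r\in R}\Pr_{PLC}(r)$. $\mathcal R_{i\le k}$ is the set of length-$k$ rankings containing $i$ (in any position). *)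

theory Defs
  imports Complex_Main
begin

definition univ :: "nat \<Rightarrow> nat set" where
  "univ n = {1..n}"

definition cs_weight :: "nat \<Rightarrow> (nat \<Rightarrow> real) \<Rightarrow> nat set \<Rightarrow> real" where
  "cs_weight n p C = (\<Prod>h\<in>C. p h) * (\<Prod>h\<in>univ n - C. 1 - p h)"

definition z_const :: "nat \<Rightarrow> nat \<Rightarrow> (nat \<Rightarrow> real) \<Rightarrow> real" where
  "z_const n k p = (\<Sum>C\<in>{C. C \<subseteq> univ n \<and> k \<le> card C}. cs_weight n p C)"

definition Pr_C :: "nat \<Rightarrow> nat \<Rightarrow> (nat \<Rightarrow> real) \<Rightarrow> nat set \<Rightarrow> real" where
  "Pr_C n k p C = (if C \<subseteq> univ n \<and> k \<le> card C then cs_weight n p C / z_const n k p else 0)"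

fun Pr_PL :: "(nat \<Rightarrow> real) \<Rightarrow> nat set \<Rightarrow> nat list \<Rightarrow> real" where
  "Pr_PL u C [] = 1"
| "Pr_PL u C (x # xs) =
     (if x \<in> C then exp (u x) / (\<Sum>h\<in>C. exp (u h)) * Pr_PL u (C - {x}) xs else 0)"

definition rankings :: "nat \<Rightarrow> nat \<Rightarrow> nat list set" where
  "rankings n k = {r. distinct r \<and> length r = k \<and> set r \<subseteq> univ n}"

definition Pr_PLC :: "nat \<Rightarrow> nat \<Rightarrow> (nat \<Rightarrow> real) \<Rightarrow> (nat \<Rightarrow> real) \<Rightarrow> nat list \<Rightarrow> real" where
  "Pr_PLC n k u p r = (\<Sum>C\<in>Pow (univ n). Pr_C n k p C * Pr_PL u C r)"

definition Pr_PLC_set :: "nat \<Rightarrow> nat \<Rightarrow> (nat \<Rightarrow> real) \<Rightarrow> (nat \<Rightarrow> real) \<Rightarrow> nat list set \<Rightarrow> real" where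
  "Pr_PLC_set n k u p R = (\<Sum>r\<in>R. Pr_PLC n k u p r)"

definition rankings_with :: "nat \<Rightarrow> nat \<Rightarrow> nat \<Rightarrow> nat list set" where
  "rankings_with n k i = {r \<in> rankings n k. i \<in> set r}"

end

theory Submission
  imports Defs
begin

lemma Pr_PL_nonneg: "0 \<le> Pr_PL u C r"
  by (induction r arbitrary: C) (auto intro!: mult_nonneg_nonneg divide_nonneg_nonneg sum_nonneg)

lemma Pr_PL_zero: "\<not> set r \<subseteq> C \<Longrightarrow> Pr_PL u C r = 0"
proof (induction r arbitrary: C)
  case (Cons a r)
  show ?case
  proof (cases "a \<in> C")
    case True
    then have "\<not> set r \<subseteq> C - {a}" using Cons.prems by auto
    then show ?thesis using Cons.IH True by simp
  qed simp
qed simp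

lemma Pr_PL_sum_le:
  assumes "finite A" "finite C"
  shows "(\<Sum>r\<in>{xs. set xs \<subseteq> A \<and> length xs = k}. Pr_PL u C r) \<le> 1"
  using assms(2)
proof (induction k arbitrary: C)
  case 0
  have "{xs. set xs \<subseteq> A \<and> length xs = 0} = {[]}" by auto
  then show ?case by simp
next
  case (Suc k)
  let ?L = "{xs. set xs \<subseteq> A \<and> length xs = k}"
  let ?S = "\<Sum>h\<in>C. exp (u h)"
  have inj: "inj_on (\<lambda>(xs, x). x # xs) (?L \<times> A)" by (auto simp: inj_on_def)
  have "(\<Sum>r\<in>{xs. set xs \<subseteq> A \<and> length xs = Suc k}. Pr_PL u C r)
      = (\<Sum>(xs,x)\<in>?L \<times> A. Pr_PL u C (x # xs))"
    unfolding lists_length_Suc_eq by (subst sum.reindex[OF inj]) (simp add: case_prod_unfold)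
  also have "\<dots> = (\<Sum>x\<in>A. \<Sum>xs\<in>?L. Pr_PL u C (x # xs))"
    by (subst sum.cartesian_product[symmetric]) (rule sum.swap)
  also have "\<dots> \<le> (\<Sum>x\<in>A. if x \<in> C then exp (u x) / ?S else 0)"
  proof (rule sum_mono)
    fix x assume "x \<in> A"
    show "(\<Sum>xs\<in>?L. Pr_PL u C (x # xs)) \<le> (if x \<in> C then exp (u x) / ?S else 0)"
    proof (cases "x \<in> C")
      case True
      have "(\<Sum>xs\<in>?L. Pr_PL u C (x # xs)) = exp (u x) / ?S * (\<Sum>xs\<in>?L. Pr_PL u (C - {x}) xs)"
        using True by (simp add: sum_distrib_left)
      also have "\<dots> \<le> exp (u x) / ?S * 1"
        using Suc.IH[of "C - {x}"] Suc.prems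
        by (intro mult_left_mono) (auto intro!: divide_nonneg_nonneg sum_nonneg)
      finally show ?thesis using True by simp
    qed simp
  qed
  also have "\<dots> = (\<Sum>x\<in>A \<inter> C. exp (u x) / ?S)"
    using assms(1) by (simp add: sum.inter_restrict)
  also have "\<dots> \<le> (\<Sum>x\<in>C. exp (u x) / ?S)"
    using Suc.prems by (intro sum_mono2) (auto intro!: divide_nonneg_nonneg sum_nonneg)
  also have "\<dots> \<le> 1"
  proof (cases "C = {}")
    case False
    then have "?S > 0" using Suc.prems by (intro sum_pos) auto
    then show ?thesis by (simp add: sum_divide_distrib[symmetric])
  qed simp
  finally show ?case .
qed


lemma finite_univ[simp]: "finite (univ n)" by (simp add: univ_def)

lemma cs_weight_nonneg:
  assumes "\<forall>h\<in>univ n. 0 < p h \<and> p h \<le> 1" "C \<subseteq> univ n"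
  shows "0 \<le> cs_weight n p C"
  unfolding cs_weight_def using assms
  by (intro mult_nonneg_nonneg prod_nonneg) (auto, (metis less_imp_le subsetD))

lemma weight_total:
  "(\<Sum>C\<in>Pow (univ n). cs_weight n p C) = 1"
proof -
  have "(\<Prod>h\<in>univ n. p h + (1 - p h)) = (\<Sum>C\<in>Pow (univ n). cs_weight n p C)"
    unfolding cs_weight_def by (rule prod_add) simp
  then show ?thesis by simp
qed

lemma weight_marg:
  assumes "i \<in> univ n"
  shows "(\<Sum>C\<in>Pow (univ n). if i \<in> C then cs_weight n p C else 0) = p i"
proof -
  define g where "g h = (if h = i then 0 else 1 - p h)" for h
  have "(\<Prod>h\<in>univ n. p h + g h) = (\<Sum>C\<in>Pow (univ n). (\<Prod>h\<in>C. p h) * (\<Prod>h\<in>univ n - C. g h))"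
    by (rule prod_add) simp
  also have "\<dots> = (\<Sum>C\<in>Pow (univ n). if i \<in> C then cs_weight n p C else 0)"
  proof (rule sum.cong)
    fix C assume C: "C \<in> Pow (univ n)"
    show "(\<Prod>h\<in>C. p h) * (\<Prod>h\<in>univ n - C. g h) = (if i \<in> C then cs_weight n p C else 0)"
    proof (cases "i \<in> C")
      case True
      then have "(\<Prod>h\<in>univ n - C. g h) = (\<Prod>h\<in>univ n - C. 1 - p h)"
        by (intro prod.cong) (auto simp: g_def)
      then show ?thesis using True by (simp add: cs_weight_def)
    next
      case False
      then have "(\<Prod>h\<in>univ n - C. g h) = 0"
        using assms by (subst prod_zero_iff) (auto simp: g_def)
      then show ?thesis using False by simp
    qed
  qed simp
  finally have eq: "(\<Prod>h\<in>univ n. p h + g h) = (\<Sum>C\<in>Pow (univ n). if i \<in> C then cs_weight n p C else 0)" .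
  have "(\<Prod>h\<in>univ n. p h + g h) = (p i + g i) * (\<Prod>h\<in>univ n - {i}. p h + g h)"
    using assms by (simp add: prod.remove)
  also have "(\<Prod>h\<in>univ n - {i}. p h + g h) = 1"
    by (intro prod.neutral) (auto simp: g_def)
  finally show ?thesis using eq by (simp add: g_def)
qed


lemma chernoff:
  assumes p: "\<forall>h\<in>univ n. 0 < p h \<and> p h \<le> 1"
    and a: "\<alpha> > 1"
    and s: "(\<Sum>h\<in>univ n. p h) \<ge> \<alpha> * real k"
  shows "(\<Sum>C\<in>{C\<in>Pow (univ n). card C < k}. cs_weight n p C) \<le> (\<alpha> * exp (1 - \<alpha>)) ^ k"
proof -
  let ?U = "univ n"
  have "(\<Sum>C\<in>{C\<in>Pow ?U. card C < k}. cs_weight n p C)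
      \<le> (\<Sum>C\<in>{C\<in>Pow ?U. card C < k}. cs_weight n p C * (\<alpha> ^ k * (1/\<alpha>) ^ card C))"
  proof (rule sum_mono)
    fix C assume C: "C \<in> {C\<in>Pow ?U. card C < k}"
    have "\<alpha> ^ k * (1/\<alpha>) ^ card C = \<alpha> ^ (k - card C)"
      using C a by (simp add: power_diff power_one_over field_simps)
    also have "\<dots> \<ge> 1" using a by simp
    finally show "cs_weight n p C \<le> cs_weight n p C * (\<alpha> ^ k * (1/\<alpha>) ^ card C)"
      using cs_weight_nonneg[OF p, of C] C
      by (metis (no_types, lifting) mem_Collect_eq PowD mult_le_cancel_left1 order.trans order_refl  mult_left_mono mult.right_neutral)
  qed
  also have "\<dots> \<le> (\<Sum>C\<in>Pow ?U. cs_weight n p C * (\<alpha> ^ k * (1/\<alpha>) ^ card C))"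
    using cs_weight_nonneg[OF p] a
    by (intro sum_mono2) (auto intro!: mult_nonneg_nonneg)
  also have "\<dots> = \<alpha> ^ k * (\<Sum>C\<in>Pow ?U. (\<Prod>h\<in>C. p h / \<alpha>) * (\<Prod>h\<in>?U - C. 1 - p h))"
    unfolding sum_distrib_left
  proof (rule sum.cong)
    fix C assume "C \<in> Pow ?U"
    then have "finite C" by (meson PowD finite_subset finite_univ)
    then have "(\<Prod>h\<in>C. p h / \<alpha>) = (\<Prod>h\<in>C. p h) * (1/\<alpha>) ^ card C"
      by (simp add: prod.distrib power_one_over divide_inverse prod_inversef)
    then show "cs_weight n p C * (\<alpha> ^ k * (1/\<alpha>) ^ card C)
        = \<alpha> ^ k * ((\<Prod>h\<in>C. p h / \<alpha>) * (\<Prod>h\<in>?U - C. 1 - p h))"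
      by (simp add: cs_weight_def)
  qed simp
  also have "\<dots> = \<alpha> ^ k * (\<Prod>h\<in>?U. p h / \<alpha> + (1 - p h))"
    by (subst prod_add) simp_all
  also have "\<dots> \<le> \<alpha> ^ k * (\<Prod>h\<in>?U. exp (- (p h * (1 - 1/\<alpha>))))"
  proof (intro mult_left_mono prod_mono conjI)
    fix h assume h: "h \<in> ?U"
    have "p h / \<alpha> \<ge> 0" using p h a by (simp add: less_imp_le)
    moreover have "p h \<le> 1" using p h by simp
    ultimately show "0 \<le> p h / \<alpha> + (1 - p h)" by simp
    have "p h / \<alpha> + (1 - p h) = 1 + (- (p h * (1 - 1/\<alpha>)))"
      by (simp add: field_simps)
    also have "\<dots> \<le> exp (- (p h * (1 - 1/\<alpha>)))" by (rule exp_ge_add_one_self)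
    finally show "p h / \<alpha> + (1 - p h) \<le> exp (- (p h * (1 - 1/\<alpha>)))" .
  qed (use a in simp)
  also have "(\<Prod>h\<in>?U. exp (- (p h * (1 - 1/\<alpha>)))) = exp (- ((1 - 1/\<alpha>) * (\<Sum>h\<in>?U. p h)))"
    by (simp add: exp_sum[symmetric] sum_negf sum_distrib_right[symmetric] mult.commute)
  also have "\<dots> \<le> exp (- ((1 - 1/\<alpha>) * (\<alpha> * real k)))"
  proof -
    have "(1 - 1/\<alpha>) * (\<alpha> * real k) \<le> (1 - 1/\<alpha>) * (\<Sum>h\<in>?U. p h)"
      using a s by (intro mult_left_mono) (auto simp: field_simps)
    then show ?thesis by simp
  qed
  also have "exp (- ((1 - 1/\<alpha>) * (\<alpha> * real k))) = exp (1 - \<alpha>) ^ k"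
    using a by (simp add: exp_of_nat_mult[symmetric] field_simps)
  finally show ?thesis using a by (simp add: power_mult_distrib)
qed


theorem theorem4:
  fixes n k :: nat and u p :: "nat \<Rightarrow> real" and \<alpha> :: real and i :: nat
  assumes "k \<le> n"
    and "\<forall>h\<in>univ n. 0 < p h \<and> p h \<le> 1"
    and "\<alpha> > 1"
    and "(\<Sum>h\<in>univ n. p h) \<ge> \<alpha> * real k"
    and "i \<in> univ n"
  shows "p i \<ge> Pr_PLC_set n k u p (rankings_with n k i) * (1 - (\<alpha> * exp (1 - \<alpha>)) ^ k)"
proof -
  note p = assms(2) and a = assms(3) and s = assms(4) and i = assms(5)
  let ?U = "univ n"
  let ?z = "z_const n k p"
  let ?R = "rankings_with n k i"
  let ?L = "{xs. set xs \<subseteq> ?U \<and> length xs = k}"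
  define \<beta> where "\<beta> = \<alpha> * exp (1 - \<alpha>)"
  have b0: "\<beta> \<ge> 0" using a by (simp add: \<beta>_def)
  have b1: "\<beta> \<le> 1"
  proof -
    have "\<alpha> \<le> exp (\<alpha> - 1)" using exp_ge_add_one_self[of "\<alpha> - 1"] by simp
    then have "\<alpha> * exp (1 - \<alpha>) \<le> exp (\<alpha> - 1) * exp (1 - \<alpha>)" by (simp add: mult_right_mono)
    then show ?thesis by (simp add: \<beta>_def exp_add[symmetric])
  qed
  have bk: "0 \<le> 1 - \<beta> ^ k" using b0 b1 by (simp add: power_le_one)
  have fin: "finite (Pow ?U)" by simp
  have split: "Pow ?U = {C \<in> Pow ?U. k \<le> card C} \<union> {C \<in> Pow ?U. card C < k}" by auto
  have "1 = (\<Sum>C\<in>Pow ?U. cs_weight n p C)" by (simp add: weight_total)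
  also have "\<dots> = ?z + (\<Sum>C\<in>{C\<in>Pow ?U. card C < k}. cs_weight n p C)"
    unfolding z_const_def by (subst split, subst sum.union_disjoint) (auto intro: rev_finite_subset)
  finally have z_eq: "?z = 1 - (\<Sum>C\<in>{C\<in>Pow ?U. card C < k}. cs_weight n p C)" by simp
  have zge: "?z \<ge> 1 - \<beta> ^ k" unfolding z_eq \<beta>_def using chernoff[OF p a s] by simp
  have z0: "?z \<ge> 0" unfolding z_const_def using cs_weight_nonneg[OF p] by (intro sum_nonneg) auto
  have PrC0: "0 \<le> Pr_C n k p C" for C
    unfolding Pr_C_def using cs_weight_nonneg[OF p, of C] z0 by auto
  have finR: "finite ?R" unfolding rankings_with_def rankings_def
    by (rule rev_finite_subset[OF finite_lists_length_eq[OF finite_univ[of n], of k]]) auto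
  have "Pr_PLC_set n k u p ?R = (\<Sum>C\<in>Pow ?U. Pr_C n k p C * (\<Sum>r\<in>?R. Pr_PL u C r))"
    unfolding Pr_PLC_set_def Pr_PLC_def by (subst sum.swap) (simp add: sum_distrib_left)
  also have "\<dots> \<le> (\<Sum>C\<in>Pow ?U. (if i \<in> C then cs_weight n p C else 0) / ?z)"
  proof (rule sum_mono)
    fix C assume C: "C \<in> Pow ?U"
    show "Pr_C n k p C * (\<Sum>r\<in>?R. Pr_PL u C r) \<le> (if i \<in> C then cs_weight n p C else 0) / ?z"
    proof (cases "i \<in> C")
      case True
      have "(\<Sum>r\<in>?R. Pr_PL u C r) \<le> (\<Sum>r\<in>?L. Pr_PL u C r)"
        by (rule sum_mono2[OF finite_lists_length_eq[OF finite_univ]])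
           (auto simp: rankings_with_def rankings_def Pr_PL_nonneg)
      also have "\<dots> \<le> 1" using C by (intro Pr_PL_sum_le finite_univ) (meson PowD finite_subset finite_univ)
      finally have "Pr_C n k p C * (\<Sum>r\<in>?R. Pr_PL u C r) \<le> Pr_C n k p C * 1"
        by (rule mult_left_mono[OF _ PrC0])
      also have "\<dots> \<le> cs_weight n p C / ?z"
        unfolding Pr_C_def using cs_weight_nonneg[OF p, of C] C z0 by auto
      finally show ?thesis using True by simp
    next
      case False
      have "(\<Sum>r\<in>?R. Pr_PL u C r) = 0"
        using False by (intro sum.neutral ballI Pr_PL_zero) (auto simp: rankings_with_def)
      then show ?thesis using False by simp
    qed
  qed
  also have "\<dots> = p i / ?z"
    by (simp add: sum_divide_distrib[symmetric] weight_marg[OF i])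
  finally have Pr_le: "Pr_PLC_set n k u p ?R \<le> p i / ?z" .
  have pi0: "p i \<ge> 0" using p i by (auto intro: less_imp_le)
  show ?thesis
  proof (cases "?z = 0")
    case True
    then have "1 - \<beta> ^ k = 0" using zge bk by simp
    then show ?thesis using pi0 by (simp add: \<beta>_def)
  next
    case False
    then have zp: "?z > 0" using z0 by simp
    have "Pr_PLC_set n k u p ?R * (1 - \<beta> ^ k) \<le> p i / ?z * (1 - \<beta> ^ k)"
      using Pr_le bk by (rule mult_right_mono)
    also have "\<dots> \<le> p i / ?z * ?z"
      using zge pi0 zp by (intro mult_left_mono) auto
    also have "\<dots> = p i" using zp by simp
    finally show ?thesis by (simp add: \<beta>_def)
  qed
qed

end
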